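(* Let $\alpha>0$ and $\varphi\in BMO$. If $\widetilde{|\varphi|}_t\in C_0(\mathbb{C})$ for every $t>0$, then $T_\varphi$ is compact on $F^\infty_\alpha$.
   Context: $BMO$ denotes the space of locally integrable functions $\varphi$ on $\mathbb{C}$ with $\sup_{z}\frac{1}{|B(z,r)|}\int_{B(z,r)}|\varphi(w)-\hat\varphi_r(z)|\,dA(w)<\infty$, $\hat\varphi_r(z)$ the average of $\varphi$ over $B(z,r)$ (independent of $r>0$). $d\lambda_\alpha(w)=\frac{\alpha}{\pi}e^{-\alpha|w|^2}dA(w)$, $K_z(w)=e^{\alpha\bar z w}$. $F^\infty_\alpha$ is the space of entire $f$ with $\|f\|_{\infty,\alpha}=\sup_z|f(z)|e^{-\alpha|z|^2/2}<\infty$. $T_\varphi f(z)=\int_{\mathbb{C}}\varphi(w)f(w)\overline{K_z(w)}\,d\lambda_\alpha(w)$. For $t>0$, $\widetilde{|\varphi|}_t(z)=\frac{\alpha}{\pi}\int_{\mathbb{C}}|\varphi(w)|e^{-\alpha t|z-w|^2/2}\,dA(w)$. $C_0(\mathbb{C})$ is the space of continuous functions vanishing at infinity. *)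

theory Defs
  imports "HOL-Analysis.Analysis"
begin

definition locally_integrable :: "(complex \<Rightarrow> complex) \<Rightarrow> bool" where
  "locally_integrable \<phi> \<longleftrightarrow> (\<forall>K. compact K \<longrightarrow> set_integrable lborel K \<phi>)"

definition ball_avg :: "(complex \<Rightarrow> complex) \<Rightarrow> real \<Rightarrow> complex \<Rightarrow> complex" where
  "ball_avg \<phi> r z = (LINT w:ball z r|lborel. \<phi> w) / complex_of_real (pi * r\<^sup>2)"

definition mean_osc :: "(complex \<Rightarrow> complex) \<Rightarrow> real \<Rightarrow> complex \<Rightarrow> real" where
  "mean_osc \<phi> r z = (LINT w:ball z r|lborel. cmod (\<phi> w - ball_avg \<phi> r z)) / (pi * r\<^sup>2)"

definition BMO :: "(complex \<Rightarrow> complex) set" where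
  "BMO = {\<phi>. locally_integrable \<phi> \<and> (\<exists>r>0. bdd_above (range (mean_osc \<phi> r)))}"

definition fock_norm :: "real \<Rightarrow> (complex \<Rightarrow> complex) \<Rightarrow> real" where
  "fock_norm \<alpha> f = (SUP z. cmod (f z) * exp (- \<alpha> * (cmod z)\<^sup>2 / 2))"

definition Fock_inf :: "real \<Rightarrow> (complex \<Rightarrow> complex) set" where
  "Fock_inf \<alpha> = {f. f holomorphic_on UNIV \<and>
      bdd_above (range (\<lambda>z. cmod (f z) * exp (- \<alpha> * (cmod z)\<^sup>2 / 2)))}"

definition fock_kernel :: "real \<Rightarrow> complex \<Rightarrow> complex \<Rightarrow> complex" where
  "fock_kernel \<alpha> z w = exp (complex_of_real \<alpha> * cnj z * w)"

definition gauss_density :: "real \<Rightarrow> complex \<Rightarrow> real" where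
  "gauss_density \<alpha> w = \<alpha> / pi * exp (- \<alpha> * (cmod w)\<^sup>2)"

definition toeplitz_integrand ::
  "real \<Rightarrow> (complex \<Rightarrow> complex) \<Rightarrow> (complex \<Rightarrow> complex) \<Rightarrow> complex \<Rightarrow> complex \<Rightarrow> complex" where
  "toeplitz_integrand \<alpha> \<phi> f z w =
     \<phi> w * f w * cnj (fock_kernel \<alpha> z w) * complex_of_real (gauss_density \<alpha> w)"

definition toeplitz :: "real \<Rightarrow> (complex \<Rightarrow> complex) \<Rightarrow> (complex \<Rightarrow> complex) \<Rightarrow> complex \<Rightarrow> complex" where
  "toeplitz \<alpha> \<phi> f z = (LINT w|lborel. toeplitz_integrand \<alpha> \<phi> f z w)"

definition tilde_integrand :: "real \<Rightarrow> (complex \<Rightarrow> complex) \<Rightarrow> real \<Rightarrow> complex \<Rightarrow> complex \<Rightarrow> real" where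
  "tilde_integrand \<alpha> \<phi> t z w = cmod (\<phi> w) * exp (- \<alpha> * t * (cmod (z - w))\<^sup>2 / 2)"

definition tilde_abs :: "real \<Rightarrow> (complex \<Rightarrow> complex) \<Rightarrow> real \<Rightarrow> complex \<Rightarrow> real" where
  "tilde_abs \<alpha> \<phi> t z = \<alpha> / pi * (LINT w|lborel. tilde_integrand \<alpha> \<phi> t z w)"

definition tilde_in_C0 :: "real \<Rightarrow> (complex \<Rightarrow> complex) \<Rightarrow> real \<Rightarrow> bool" where
  "tilde_in_C0 \<alpha> \<phi> t \<longleftrightarrow>
     (\<forall>z. integrable lborel (tilde_integrand \<alpha> \<phi> t z)) \<and>
     continuous_on UNIV (tilde_abs \<alpha> \<phi> t) \<and>
     (tilde_abs \<alpha> \<phi> t \<longlongrightarrow> 0) at_infinity"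

definition toeplitz_compact_on_Fock :: "real \<Rightarrow> (complex \<Rightarrow> complex) \<Rightarrow> bool" where
  "toeplitz_compact_on_Fock \<alpha> \<phi> \<longleftrightarrow>
     (\<forall>f\<in>Fock_inf \<alpha>. \<forall>z. integrable lborel (toeplitz_integrand \<alpha> \<phi> f z)) \<and>
     (\<forall>f\<in>Fock_inf \<alpha>. toeplitz \<alpha> \<phi> f \<in> Fock_inf \<alpha>) \<and>
     (\<forall>F::nat \<Rightarrow> complex \<Rightarrow> complex. (\<forall>n. F n \<in> Fock_inf \<alpha>) \<and> bdd_above (range (\<lambda>n. fock_norm \<alpha> (F n))) \<longrightarrow>
        (\<exists>(r::nat \<Rightarrow> nat) g. strict_mono r \<and> g \<in> Fock_inf \<alpha> \<and>
           (\<lambda>n. fock_norm \<alpha> (\<lambda>z. toeplitz \<alpha> \<phi> (F (r n)) z - g z)) \<longlonglongrightarrow> 0))"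

end

theory Submission
  imports Defs "HOL-Complex_Analysis.Complex_Analysis"
begin

lemma phi_meas:
  assumes "\<phi> \<in> BMO" shows "\<phi> \<in> borel_measurable lborel"
proof -
  have li: "\<And>K. compact K \<Longrightarrow> integrable lborel (\<lambda>x. indicator K x *\<^sub>R \<phi> x)"
    using assms unfolding BMO_def locally_integrable_def set_integrable_def by auto
  show ?thesis
  proof (rule borel_measurable_LIMSEQ_metric[where f="\<lambda>n x. indicator (cball 0 (real n)) x *\<^sub>R \<phi> x"])
    show "(\<lambda>x. indicator (cball 0 (real i)) x *\<^sub>R \<phi> x) \<in> borel_measurable lborel" for i
      using li[of "cball 0 (real i)"] by (auto intro: borel_measurable_integrable)
    fix x :: complex
    obtain N :: nat where "cmod x \<le> real N" using real_arch_simple by blast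
    hence "\<forall>n\<ge>N. indicator (cball 0 (real n)) x *\<^sub>R \<phi> x = \<phi> x" by auto
    thus "(\<lambda>n. indicator (cball 0 (real n)) x *\<^sub>R \<phi> x) \<longlonglongrightarrow> \<phi> x"
      by (intro tendsto_eventually) (auto simp: eventually_sequentially)
  qed
qed

lemma sq_id:
  fixes z w :: complex
  shows "Re (z * cnj w) = ((cmod z)\<^sup>2 + (cmod w)\<^sup>2 - (cmod (z - w))\<^sup>2) / 2"
  unfolding cmod_power2 by (simp add: power2_eq_square algebra_simps)

lemma norm_ti:
  assumes "\<alpha> > 0"
  shows "norm (toeplitz_integrand \<alpha> \<phi> h z w) =
     cmod (\<phi> w) * (cmod (h w) * exp (- \<alpha> * (cmod w)\<^sup>2 / 2)) * (\<alpha> / pi) *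
       exp (\<alpha> * (cmod z)\<^sup>2 / 2) * exp (- \<alpha> * (cmod (z - w))\<^sup>2 / 2)"
proof -
  have k: "cmod (cnj (fock_kernel \<alpha> z w)) = exp (\<alpha> * Re (z * cnj w))"
    unfolding fock_kernel_def by (simp add: exp_cnj algebra_simps)
  have g: "cmod (complex_of_real (gauss_density \<alpha> w)) = \<alpha> / pi * exp (- \<alpha> * (cmod w)\<^sup>2)"
    unfolding norm_of_real gauss_density_def using assms by simp
  have e: "exp (\<alpha> * Re (z * cnj w)) * exp (- \<alpha> * (cmod w)\<^sup>2) =
      exp (- \<alpha> * (cmod w)\<^sup>2 / 2) * exp (\<alpha> * (cmod z)\<^sup>2 / 2) * exp (- \<alpha> * (cmod (z - w))\<^sup>2 / 2)"
    unfolding sq_id by (simp add: exp_add[symmetric] field_simps)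
  show ?thesis unfolding toeplitz_integrand_def norm_mult k g
    using e by (simp add: algebra_simps)
qed

lemma ti_bound1:
  assumes a: "\<alpha> > 0" and hb: "cmod (h w) * exp (- \<alpha> * (cmod w)\<^sup>2 / 2) \<le> B"
  shows "norm (toeplitz_integrand \<alpha> \<phi> h z w) \<le> B * (\<alpha> / pi) * exp (\<alpha> * (cmod z)\<^sup>2 / 2) * tilde_integrand \<alpha> \<phi> 1 z w"
proof -
  have "norm (toeplitz_integrand \<alpha> \<phi> h z w) = (cmod (h w) * exp (- \<alpha> * (cmod w)\<^sup>2 / 2)) *
     ((\<alpha> / pi) * exp (\<alpha> * (cmod z)\<^sup>2 / 2) * tilde_integrand \<alpha> \<phi> 1 z w)"
    unfolding norm_ti[OF a] tilde_integrand_def by (simp add: algebra_simps)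
  also have "\<dots> \<le> B * ((\<alpha> / pi) * exp (\<alpha> * (cmod z)\<^sup>2 / 2) * tilde_integrand \<alpha> \<phi> 1 z w)"
    using a hb by (intro mult_right_mono) (auto simp: tilde_integrand_def)
  finally show ?thesis by (simp add: algebra_simps)
qed

lemma exp_shift_bound:
  assumes a: "\<alpha> > 0"
  shows "exp (- \<alpha> * (cmod (z - w))\<^sup>2 / 2) \<le> exp (\<alpha> * (cmod z)\<^sup>2 / 2) * exp (- \<alpha> * (cmod w)\<^sup>2 / 4)"
proof -
  have t: "cmod w \<le> cmod z + cmod (z - w)"
    using norm_triangle_sub[of w z] by (simp add: norm_minus_commute)
  have "(cmod w)\<^sup>2 \<le> (cmod z + cmod (z - w))\<^sup>2"
    using t by (intro power_mono) auto
  also have "\<dots> \<le> 2 * (cmod z)\<^sup>2 + 2 * (cmod (z - w))\<^sup>2"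
    using zero_le_power2[of "cmod z - cmod (z - w)"] by (simp add: power2_eq_square algebra_simps)
  finally have sq: "(cmod w)\<^sup>2 \<le> 2 * (cmod z)\<^sup>2 + 2 * (cmod (z - w))\<^sup>2" .
  have "- \<alpha> * (cmod (z - w))\<^sup>2 / 2 \<le> \<alpha> * (cmod z)\<^sup>2 / 2 + - \<alpha> * (cmod w)\<^sup>2 / 4"
    using mult_left_mono[OF sq less_imp_le[OF a]] by (simp add: algebra_simps)
  thus ?thesis by (simp add: exp_add[symmetric])
qed

lemma ti_bound2:
  assumes a: "\<alpha> > 0"
  shows "norm (toeplitz_integrand \<alpha> \<phi> h z w) \<le> (\<alpha> / pi) * exp (\<alpha> * (cmod z)\<^sup>2) *
     (cmod (\<phi> w) * cmod (h w) * exp (- \<alpha> * (cmod w)\<^sup>2 / 2) * exp (- \<alpha> * (cmod w)\<^sup>2 / 4))"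
proof -
  have "norm (toeplitz_integrand \<alpha> \<phi> h z w) \<le>
     cmod (\<phi> w) * (cmod (h w) * exp (- \<alpha> * (cmod w)\<^sup>2 / 2)) * (\<alpha> / pi) *
       exp (\<alpha> * (cmod z)\<^sup>2 / 2) * (exp (\<alpha> * (cmod z)\<^sup>2 / 2) * exp (- \<alpha> * (cmod w)\<^sup>2 / 4))"
    unfolding norm_ti[OF a] using a exp_shift_bound[OF a, of z w]
    by (intro mult_left_mono) auto
  also have "\<dots> = (\<alpha> / pi) * exp (\<alpha> * (cmod z)\<^sup>2) *
     (cmod (\<phi> w) * cmod (h w) * exp (- \<alpha> * (cmod w)\<^sup>2 / 2) * exp (- \<alpha> * (cmod w)\<^sup>2 / 4))"
    by (simp add: algebra_simps mult_exp_exp)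
  finally show ?thesis .
qed

lemma ti_meas:
  assumes pm: "\<phi> \<in> borel_measurable lborel" and hc: "continuous_on UNIV h"
  shows "toeplitz_integrand \<alpha> \<phi> h z \<in> borel_measurable lborel"
proof -
  have "h \<in> borel_measurable borel" using hc by (rule borel_measurable_continuous_onI)
  hence hm: "h \<in> borel_measurable lborel" by simp
  have km: "(\<lambda>w. cnj (fock_kernel \<alpha> z w) * complex_of_real (gauss_density \<alpha> w)) \<in> borel_measurable borel"
    unfolding fock_kernel_def gauss_density_def
    by (intro borel_measurable_continuous_onI continuous_intros)
  hence "(\<lambda>w. cnj (fock_kernel \<alpha> z w) * complex_of_real (gauss_density \<alpha> w)) \<in> borel_measurable lborel" by simp
  with pm hm have "(\<lambda>w. \<phi> w * h w * (cnj (fock_kernel \<alpha> z w) * complex_of_real (gauss_density \<alpha> w))) \<in> borel_measurable lborel"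
    by measurable
  thus ?thesis unfolding toeplitz_integrand_def by (simp add: mult.assoc)
qed

lemma ti_integrable:
  assumes a: "\<alpha> > 0" and pm: "\<phi> \<in> borel_measurable lborel" and hc: "continuous_on UNIV h"
    and hb: "\<And>w. cmod (h w) * exp (- \<alpha> * (cmod w)\<^sup>2 / 2) \<le> B"
    and ii: "integrable lborel (tilde_integrand \<alpha> \<phi> 1 z)"
  shows "integrable lborel (toeplitz_integrand \<alpha> \<phi> h z)"
proof (rule Bochner_Integration.integrable_bound)
  show "integrable lborel (\<lambda>w. B * (\<alpha> / pi) * exp (\<alpha> * (cmod z)\<^sup>2 / 2) * tilde_integrand \<alpha> \<phi> 1 z w)"
    using ii by simp
  show "toeplitz_integrand \<alpha> \<phi> h z \<in> borel_measurable lborel" by (rule ti_meas[OF pm hc])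
  show "AE x in lborel. norm (toeplitz_integrand \<alpha> \<phi> h z x) \<le> norm (B * (\<alpha> / pi) * exp (\<alpha> * (cmod z)\<^sup>2 / 2) * tilde_integrand \<alpha> \<phi> 1 z x)"
  proof (intro AE_I2)
    fix x
    have "norm (toeplitz_integrand \<alpha> \<phi> h z x) \<le> B * (\<alpha> / pi) * exp (\<alpha> * (cmod z)\<^sup>2 / 2) * tilde_integrand \<alpha> \<phi> 1 z x"
      by (rule ti_bound1[OF a hb])
    thus "norm (toeplitz_integrand \<alpha> \<phi> h z x) \<le> norm (B * (\<alpha> / pi) * exp (\<alpha> * (cmod z)\<^sup>2 / 2) * tilde_integrand \<alpha> \<phi> 1 z x)"
      by (metis abs_ge_self order_trans real_norm_def)
  qed
qed

lemma T_bound1: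
  assumes a: "\<alpha> > 0" and pm: "\<phi> \<in> borel_measurable lborel" and hc: "continuous_on UNIV h"
    and hb: "\<And>w. cmod (h w) * exp (- \<alpha> * (cmod w)\<^sup>2 / 2) \<le> B"
    and ii: "integrable lborel (tilde_integrand \<alpha> \<phi> 1 z)"
  shows "cmod (toeplitz \<alpha> \<phi> h z) \<le> B * exp (\<alpha> * (cmod z)\<^sup>2 / 2) * tilde_abs \<alpha> \<phi> 1 z"
proof -
  have "cmod (toeplitz \<alpha> \<phi> h z) \<le> (LINT w|lborel. B * (\<alpha> / pi) * exp (\<alpha> * (cmod z)\<^sup>2 / 2) * tilde_integrand \<alpha> \<phi> 1 z w)"
    unfolding toeplitz_def
    apply (rule Bochner_Integration.integral_norm_bound_integral[OF ti_integrable[OF a pm hc hb ii]])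
    using ii apply simp
    by (rule ti_bound1[OF a hb])
  also have "\<dots> = B * exp (\<alpha> * (cmod z)\<^sup>2 / 2) * tilde_abs \<alpha> \<phi> 1 z"
    unfolding tilde_abs_def by (simp add: algebra_simps)
  finally show ?thesis .
qed

definition Jf :: "real \<Rightarrow> (complex \<Rightarrow> complex) \<Rightarrow> (complex \<Rightarrow> complex) \<Rightarrow> complex \<Rightarrow> real" where
  "Jf \<alpha> \<phi> h w = cmod (\<phi> w) * cmod (h w) * exp (- \<alpha> * (cmod w)\<^sup>2 / 2) * exp (- \<alpha> * (cmod w)\<^sup>2 / 4)"

lemma tilde_half: "tilde_integrand \<alpha> \<phi> (1/2) 0 w = cmod (\<phi> w) * exp (- \<alpha> * (cmod w)\<^sup>2 / 4)"
  unfolding tilde_integrand_def by simp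

lemma Jf_bound:
  assumes hb: "cmod (h w) * exp (- \<alpha> * (cmod w)\<^sup>2 / 2) \<le> B"
  shows "norm (Jf \<alpha> \<phi> h w) \<le> B * tilde_integrand \<alpha> \<phi> (1/2) 0 w"
proof -
  have "norm (Jf \<alpha> \<phi> h w) = (cmod (h w) * exp (- \<alpha> * (cmod w)\<^sup>2 / 2)) * tilde_integrand \<alpha> \<phi> (1/2) 0 w"
    unfolding Jf_def tilde_half by (simp add: abs_mult)
  also have "\<dots> \<le> B * tilde_integrand \<alpha> \<phi> (1/2) 0 w"
    using hb by (intro mult_right_mono) (auto simp: tilde_half)
  finally show ?thesis .
qed

lemma Jf_meas:
  assumes pm: "\<phi> \<in> borel_measurable lborel" and hc: "continuous_on UNIV h"
  shows "Jf \<alpha> \<phi> h \<in> borel_measurable lborel"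
proof -
  have "h \<in> borel_measurable borel" using hc by (rule borel_measurable_continuous_onI)
  hence hm: "h \<in> borel_measurable lborel" by simp
  have km: "(\<lambda>w. exp (- \<alpha> * (cmod w)\<^sup>2 / 2) * exp (- \<alpha> * (cmod w)\<^sup>2 / 4)) \<in> borel_measurable borel"
    by (intro borel_measurable_continuous_onI continuous_intros) auto
  hence "(\<lambda>w. exp (- \<alpha> * (cmod w)\<^sup>2 / 2) * exp (- \<alpha> * (cmod w)\<^sup>2 / 4)) \<in> borel_measurable lborel" by simp
  with pm hm have "(\<lambda>w. cmod (\<phi> w) * cmod (h w) * (exp (- \<alpha> * (cmod w)\<^sup>2 / 2) * exp (- \<alpha> * (cmod w)\<^sup>2 / 4))) \<in> borel_measurable lborel"
    by measurable
  thus ?thesis unfolding Jf_def by (simp add: mult.assoc)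
qed

lemma Jf_integrable:
  assumes pm: "\<phi> \<in> borel_measurable lborel" and hc: "continuous_on UNIV h"
    and hb: "\<And>w. cmod (h w) * exp (- \<alpha> * (cmod w)\<^sup>2 / 2) \<le> B"
    and ii: "integrable lborel (tilde_integrand \<alpha> \<phi> (1/2) 0)"
  shows "integrable lborel (Jf \<alpha> \<phi> h)"
proof (rule Bochner_Integration.integrable_bound)
  show "integrable lborel (\<lambda>w. B * tilde_integrand \<alpha> \<phi> (1/2) 0 w)" using ii by simp
  show "Jf \<alpha> \<phi> h \<in> borel_measurable lborel" by (rule Jf_meas[OF pm hc])
  show "AE x in lborel. norm (Jf \<alpha> \<phi> h x) \<le> norm (B * tilde_integrand \<alpha> \<phi> (1/2) 0 x)"
  proof (intro AE_I2)
    fix x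
    have "norm (Jf \<alpha> \<phi> h x) \<le> B * tilde_integrand \<alpha> \<phi> (1/2) 0 x" by (rule Jf_bound[OF hb])
    thus "norm (Jf \<alpha> \<phi> h x) \<le> norm (B * tilde_integrand \<alpha> \<phi> (1/2) 0 x)"
      by (metis abs_ge_self order_trans real_norm_def)
  qed
qed

lemma T_bound2:
  assumes a: "\<alpha> > 0" and pm: "\<phi> \<in> borel_measurable lborel" and hc: "continuous_on UNIV h"
    and hb: "\<And>w. cmod (h w) * exp (- \<alpha> * (cmod w)\<^sup>2 / 2) \<le> B"
    and ii: "integrable lborel (tilde_integrand \<alpha> \<phi> 1 z)"
    and ii2: "integrable lborel (tilde_integrand \<alpha> \<phi> (1/2) 0)"
  shows "cmod (toeplitz \<alpha> \<phi> h z) \<le> (\<alpha> / pi) * exp (\<alpha> * (cmod z)\<^sup>2) * (LINT w|lborel. Jf \<alpha> \<phi> h w)"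
proof -
  have "cmod (toeplitz \<alpha> \<phi> h z) \<le> (LINT w|lborel. (\<alpha> / pi) * exp (\<alpha> * (cmod z)\<^sup>2) * Jf \<alpha> \<phi> h w)"
    unfolding toeplitz_def
    apply (rule Bochner_Integration.integral_norm_bound_integral[OF ti_integrable[OF a pm hc hb ii]])
    using Jf_integrable[OF pm hc hb ii2] apply simp
    unfolding Jf_def by (rule ti_bound2[OF a])
  also have "\<dots> = (\<alpha> / pi) * exp (\<alpha> * (cmod z)\<^sup>2) * (LINT w|lborel. Jf \<alpha> \<phi> h w)"
    by simp
  finally show ?thesis .
qed

lemma C0_bounded:
  fixes g :: "complex \<Rightarrow> real"
  assumes "continuous_on UNIV g" and "(g \<longlongrightarrow> 0) at_infinity"
  shows "\<exists>S. \<forall>z. \<bar>g z\<bar> \<le> S"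
proof -
  have "eventually (\<lambda>z. dist (g z) 0 < 1) at_infinity"
    using assms(2) by (rule tendstoD) simp
  then obtain b where b: "\<And>z. b \<le> norm z \<Longrightarrow> \<bar>g z\<bar> < 1"
    unfolding eventually_at_infinity by auto
  have "compact (g ` cball 0 b)"
    using assms(1) by (intro compact_continuous_image) (auto intro: continuous_on_subset)
  then obtain M where M: "\<And>y. y \<in> g ` cball 0 b \<Longrightarrow> norm y \<le> M"
    using compact_imp_bounded bounded_iff by metis
  have "\<bar>g z\<bar> \<le> max 1 M" for z
  proof (cases "b \<le> norm z")
    case True thus ?thesis using b[of z] by auto
  next
    case False thus ?thesis using M[of "g z"] by auto
  qed
  thus ?thesis by blast
qed

lemma key_ineq:
  fixes \<alpha> a x :: real
  assumes a: "\<alpha> > 0" and x: "x \<ge> 0"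
  shows "x * exp (a * x) * exp (- \<alpha> * x\<^sup>2 / 2) \<le> exp ((a + 1)\<^sup>2 / \<alpha>) * exp (- \<alpha> * x\<^sup>2 / 4)"
proof -
  have "x \<le> exp x" using exp_ge_add_one_self[of x] by linarith
  hence "x * exp (a * x) * exp (- \<alpha> * x\<^sup>2 / 2) \<le> exp x * exp (a * x) * exp (- \<alpha> * x\<^sup>2 / 2)"
    by (intro mult_right_mono) auto
  also have "\<dots> = exp ((a + 1) * x - \<alpha> * x\<^sup>2 / 2)"
    by (simp add: exp_add[symmetric] exp_diff algebra_simps)
  also have "\<dots> \<le> exp ((a + 1)\<^sup>2 / \<alpha> - \<alpha> * x\<^sup>2 / 4)"
  proof -
    have sq: "0 \<le> ((a + 1) - \<alpha> * x / 2)\<^sup>2" by simp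
    have "\<alpha> * ((a + 1) * x - \<alpha> * x\<^sup>2 / 4) \<le> (a + 1)\<^sup>2"
      using sq by (simp add: power2_eq_square algebra_simps)
    hence "(a + 1) * x - \<alpha> * x\<^sup>2 / 4 \<le> (a + 1)\<^sup>2 / \<alpha>"
      using a by (simp add: field_simps)
    thus ?thesis by simp
  qed
  also have "\<dots> = exp ((a + 1)\<^sup>2 / \<alpha>) * exp (- \<alpha> * x\<^sup>2 / 4)"
    by (subst exp_add[symmetric]) simp
  finally show ?thesis .
qed

lemma exp_quot_bound:
  fixes c z z0 :: complex
  assumes "norm z \<le> R" "norm z0 \<le> R" "z \<noteq> z0"
  shows "norm ((exp (c * z) - exp (c * z0)) / (z - z0)) \<le> cmod c * exp (cmod c * R)"
proof -
  have "norm (exp (c * z) - exp (c * z0)) \<le> (cmod c * exp (cmod c * R)) * norm (z - z0)"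
  proof (rule field_differentiable_bound[where S="cball 0 R" and f'="\<lambda>z. exp (c * z) * c"])
    show "convex (cball (0::complex) R)" by simp
    show "((\<lambda>z. exp (c * z)) has_field_derivative exp (c * y) * c) (at y within cball 0 R)" for y
      by (auto intro!: derivative_eq_intros)
    show "norm (exp (c * y) * c) \<le> cmod c * exp (cmod c * R)" if "y \<in> cball 0 R" for y
    proof -
      have "norm (exp (c * y)) \<le> exp (norm (c * y))" by (rule norm_exp)
      also have "\<dots> \<le> exp (cmod c * R)"
        using that by (auto simp: norm_mult intro!: mult_left_mono)
      finally show ?thesis by (simp add: norm_mult mult.commute mult_left_mono)
    qed
    show "z \<in> cball 0 R" "z0 \<in> cball 0 R" using assms by auto
  qed
  thus ?thesis using assms(3) by (simp add: norm_divide divide_le_eq)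
qed

lemma ti_eq: "toeplitz_integrand \<alpha> \<phi> h z w =
   (\<phi> w * h w * complex_of_real (gauss_density \<alpha> w)) * exp ((complex_of_real \<alpha> * cnj w) * z)"
  unfolding toeplitz_integrand_def fock_kernel_def by (simp add: exp_cnj algebra_simps)

lemma T_holo:
  assumes a: "\<alpha> > 0" and pm: "\<phi> \<in> borel_measurable lborel" and hc: "continuous_on UNIV h"
    and hb: "\<And>w. cmod (h w) * exp (- \<alpha> * (cmod w)\<^sup>2 / 2) \<le> B"
    and ii: "\<And>z. integrable lborel (tilde_integrand \<alpha> \<phi> 1 z)"
    and ii2: "integrable lborel (tilde_integrand \<alpha> \<phi> (1/2) 0)"
  shows "toeplitz \<alpha> \<phi> h holomorphic_on UNIV"
proof -
  have B0: "0 \<le> B" using hb[of 0] by (smt (verit) mult_nonneg_nonneg norm_ge_zero exp_gt_zero)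
  define A where "A w = \<phi> w * h w * complex_of_real (gauss_density \<alpha> w)" for w
  define c where "c w = complex_of_real \<alpha> * cnj w" for w
  have tieq: "toeplitz_integrand \<alpha> \<phi> h z w = A w * exp (c w * z)" for z w
    unfolding A_def c_def by (rule ti_eq)
  have "h \<in> borel_measurable borel" using hc by (rule borel_measurable_continuous_onI)
  hence hm[measurable]: "h \<in> borel_measurable lborel" by simp
  have gm: "(\<lambda>w. complex_of_real (gauss_density \<alpha> w)) \<in> borel_measurable borel"
    unfolding gauss_density_def by (intro borel_measurable_continuous_onI continuous_intros)
  hence gm'[measurable]: "(\<lambda>w. complex_of_real (gauss_density \<alpha> w)) \<in> borel_measurable lborel" by simp
  have pm'[measurable]: "\<phi> \<in> borel_measurable lborel" by (rule pm)
  have Am[measurable]: "A \<in> borel_measurable lborel"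
    unfolding A_def[abs_def] by measurable
  have nA: "cmod (A w) = cmod (\<phi> w) * cmod (h w) * (\<alpha> / pi * exp (- \<alpha> * (cmod w)\<^sup>2))" for w
    unfolding A_def norm_mult norm_of_real gauss_density_def using a by simp
  have nc: "cmod (c w) = \<alpha> * cmod w" for w
    unfolding c_def norm_mult using a by simp
  have "(toeplitz \<alpha> \<phi> h) field_differentiable (at z0)" for z0
  proof -
    define D where "D = (LINT w|lborel. A w * (c w * exp (c w * z0)))"
    have "((\<lambda>y. (toeplitz \<alpha> \<phi> h y - toeplitz \<alpha> \<phi> h z0) / (y - z0)) \<longlongrightarrow> D) (at z0)"
      unfolding tendsto_at_iff_sequentially
    proof (intro allI impI)
      fix X :: "nat \<Rightarrow> complex"
      assume X: "\<forall>i. X i \<in> UNIV - {z0}" and Xl: "X \<longlonglongrightarrow> z0"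
      obtain K where K: "\<And>n. norm (X n) \<le> K"
        using BseqE[OF convergent_imp_Bseq[OF convergentI[OF Xl]]] by metis
      define R where "R = max K (cmod z0)"
      have XR: "norm (X n) \<le> R" for n using K[of n] unfolding R_def by simp
      have z0R: "norm z0 \<le> R" unfolding R_def by simp
      have R0: "0 \<le> R" using z0R norm_ge_zero order_trans by blast
      define Cst where "Cst = B * (\<alpha> * \<alpha> / pi) * exp ((\<alpha> * R + 1)\<^sup>2 / \<alpha>)"
      have eq: "((\<lambda>y. (toeplitz \<alpha> \<phi> h y - toeplitz \<alpha> \<phi> h z0) / (y - z0)) \<circ> X) i =
          (LINT w|lborel. A w * ((exp (c w * X i) - exp (c w * z0)) / (X i - z0)))" for i
      proof -
        have "((\<lambda>y. (toeplitz \<alpha> \<phi> h y - toeplitz \<alpha> \<phi> h z0) / (y - z0)) \<circ> X) i =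
           (LINT w|lborel. (toeplitz_integrand \<alpha> \<phi> h (X i) w - toeplitz_integrand \<alpha> \<phi> h z0 w) / (X i - z0))"
          unfolding toeplitz_def comp_def integral_divide_zero
          using ti_integrable[OF a pm hc hb ii] by (simp add: integral_diff)
        also have "\<dots> = (LINT w|lborel. A w * ((exp (c w * X i) - exp (c w * z0)) / (X i - z0)))"
          unfolding tieq by (simp add: algebra_simps diff_divide_distrib)
        finally show ?thesis .
      qed
      show "((\<lambda>y. (toeplitz \<alpha> \<phi> h y - toeplitz \<alpha> \<phi> h z0) / (y - z0)) \<circ> X) \<longlonglongrightarrow> D"
        unfolding eq D_def
      proof (rule integral_dominated_convergence[where w="\<lambda>w. Cst * tilde_integrand \<alpha> \<phi> (1/2) 0 w"])
        have "(\<lambda>w. c w * exp (c w * z0)) \<in> borel_measurable borel"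
          unfolding c_def by (intro borel_measurable_continuous_onI continuous_intros)
        hence [measurable]: "(\<lambda>w. c w * exp (c w * z0)) \<in> borel_measurable lborel" by simp
        show "(\<lambda>w. A w * (c w * exp (c w * z0))) \<in> borel_measurable lborel" by measurable
        fix i
        have "(\<lambda>w. (exp (c w * X i) - exp (c w * z0)) / (X i - z0)) \<in> borel_measurable borel"
          unfolding c_def using X by (intro borel_measurable_continuous_onI continuous_intros) auto
        hence [measurable]: "(\<lambda>w. (exp (c w * X i) - exp (c w * z0)) / (X i - z0)) \<in> borel_measurable lborel" by simp
        show "(\<lambda>w. A w * ((exp (c w * X i) - exp (c w * z0)) / (X i - z0))) \<in> borel_measurable lborel"
          by measurable
      next
        show "integrable lborel (\<lambda>w. Cst * tilde_integrand \<alpha> \<phi> (1/2) 0 w)" using ii2 by simp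
      next
        show "AE w in lborel. (\<lambda>i. A w * ((exp (c w * X i) - exp (c w * z0)) / (X i - z0)))
                \<longlonglongrightarrow> A w * (c w * exp (c w * z0))"
        proof (intro AE_I2)
          fix w
          have "((\<lambda>z. exp (c w * z)) has_field_derivative exp (c w * z0) * c w) (at z0)"
            by (auto intro!: derivative_eq_intros)
          hence "((\<lambda>y. (exp (c w * y) - exp (c w * z0)) / (y - z0)) \<longlongrightarrow> exp (c w * z0) * c w) (at z0)"
            unfolding has_field_derivative_iff .
          hence "((\<lambda>y. (exp (c w * y) - exp (c w * z0)) / (y - z0)) \<circ> X) \<longlonglongrightarrow> exp (c w * z0) * c w"
            unfolding tendsto_at_iff_sequentially using X Xl by blast
          hence "(\<lambda>i. (exp (c w * X i) - exp (c w * z0)) / (X i - z0)) \<longlonglongrightarrow> c w * exp (c w * z0)"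
            by (simp add: comp_def mult.commute)
          thus "(\<lambda>i. A w * ((exp (c w * X i) - exp (c w * z0)) / (X i - z0))) \<longlonglongrightarrow> A w * (c w * exp (c w * z0))"
            by (rule tendsto_mult_left)
        qed
      next
        fix i
        show "AE w in lborel. norm (A w * ((exp (c w * X i) - exp (c w * z0)) / (X i - z0)))
                \<le> Cst * tilde_integrand \<alpha> \<phi> (1/2) 0 w"
        proof (intro AE_I2)
          fix w
          have Xz: "X i \<noteq> z0" using X by auto
          have q: "norm ((exp (c w * X i) - exp (c w * z0)) / (X i - z0)) \<le> cmod (c w) * exp (cmod (c w) * R)"
            by (rule exp_quot_bound[OF XR z0R Xz])
          have "norm (A w * ((exp (c w * X i) - exp (c w * z0)) / (X i - z0)))
               \<le> cmod (A w) * (cmod (c w) * exp (cmod (c w) * R))"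
            unfolding norm_mult by (intro mult_left_mono[OF q]) simp
          also have "\<dots> = cmod (\<phi> w) * (\<alpha> * \<alpha> / pi) * ((cmod (h w) * exp (- \<alpha> * (cmod w)\<^sup>2 / 2)) *
               (cmod w * exp ((\<alpha> * R) * cmod w) * exp (- \<alpha> * (cmod w)\<^sup>2 / 2)))"
          proof -
            have e2: "exp (- \<alpha> * (cmod w)\<^sup>2) = exp (- \<alpha> * (cmod w)\<^sup>2 / 2) * exp (- \<alpha> * (cmod w)\<^sup>2 / 2)"
              by (simp add: mult_exp_exp)
            show ?thesis unfolding nA nc e2 by (simp add: algebra_simps)
          qed
          also have "\<dots> \<le> cmod (\<phi> w) * (\<alpha> * \<alpha> / pi) * (B * (exp ((\<alpha> * R + 1)\<^sup>2 / \<alpha>) * exp (- \<alpha> * (cmod w)\<^sup>2 / 4)))"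
          proof -
            have k: "cmod w * exp ((\<alpha> * R) * cmod w) * exp (- \<alpha> * (cmod w)\<^sup>2 / 2) \<le> exp ((\<alpha> * R + 1)\<^sup>2 / \<alpha>) * exp (- \<alpha> * (cmod w)\<^sup>2 / 4)"
              by (rule key_ineq[OF a norm_ge_zero])
            show ?thesis using a B0 by (intro mult_left_mono[OF mult_mono[OF hb k]]) auto
          qed
          also have "\<dots> = Cst * tilde_integrand \<alpha> \<phi> (1/2) 0 w"
            unfolding Cst_def tilde_half by (simp add: algebra_simps)
          finally show "norm (A w * ((exp (c w * X i) - exp (c w * z0)) / (X i - z0)))
                \<le> Cst * tilde_integrand \<alpha> \<phi> (1/2) 0 w" .
        qed
      qed
    qed
    thus ?thesis unfolding field_differentiable_def has_field_derivative_iff by blast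
  qed
  thus ?thesis by (simp add: holomorphic_on_def field_differentiable_at_within)
qed

lemma fock_le:
  assumes "f \<in> Fock_inf \<alpha>"
  shows "cmod (f z) * exp (- \<alpha> * (cmod z)\<^sup>2 / 2) \<le> fock_norm \<alpha> f"
  using assms unfolding Fock_inf_def fock_norm_def by (auto intro: cSUP_upper)

lemma fock_cont:
  assumes "f \<in> Fock_inf \<alpha>" shows "continuous_on UNIV f"
  using assms unfolding Fock_inf_def by (auto intro: holomorphic_on_imp_continuous_on)

lemma T_weighted:
  assumes a: "\<alpha> > 0" and pm: "\<phi> \<in> borel_measurable lborel" and hc: "continuous_on UNIV h"
    and hb: "\<And>w. cmod (h w) * exp (- \<alpha> * (cmod w)\<^sup>2 / 2) \<le> B"
    and ii: "integrable lborel (tilde_integrand \<alpha> \<phi> 1 z)"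
  shows "cmod (toeplitz \<alpha> \<phi> h z) * exp (- \<alpha> * (cmod z)\<^sup>2 / 2) \<le> B * tilde_abs \<alpha> \<phi> 1 z"
proof -
  have "cmod (toeplitz \<alpha> \<phi> h z) * exp (- \<alpha> * (cmod z)\<^sup>2 / 2) \<le>
      B * exp (\<alpha> * (cmod z)\<^sup>2 / 2) * tilde_abs \<alpha> \<phi> 1 z * exp (- \<alpha> * (cmod z)\<^sup>2 / 2)"
    by (intro mult_right_mono T_bound1[OF a pm hc hb ii]) simp
  also have "\<dots> = B * tilde_abs \<alpha> \<phi> 1 z * (exp (\<alpha> * (cmod z)\<^sup>2 / 2) * exp (- \<alpha> * (cmod z)\<^sup>2 / 2))"
    by (simp add: algebra_simps)
  also have "\<dots> = B * tilde_abs \<alpha> \<phi> 1 z"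
    by (simp add: mult_exp_exp)
  finally show ?thesis .
qed

lemma T_weighted2:
  assumes a: "\<alpha> > 0" and pm: "\<phi> \<in> borel_measurable lborel" and hc: "continuous_on UNIV h"
    and hb: "\<And>w. cmod (h w) * exp (- \<alpha> * (cmod w)\<^sup>2 / 2) \<le> B"
    and ii: "integrable lborel (tilde_integrand \<alpha> \<phi> 1 z)"
    and ii2: "integrable lborel (tilde_integrand \<alpha> \<phi> (1/2) 0)"
  shows "cmod (toeplitz \<alpha> \<phi> h z) * exp (- \<alpha> * (cmod z)\<^sup>2 / 2) \<le>
     (\<alpha> / pi) * exp (\<alpha> * (cmod z)\<^sup>2 / 2) * (LINT w|lborel. Jf \<alpha> \<phi> h w)"
proof -
  have "cmod (toeplitz \<alpha> \<phi> h z) * exp (- \<alpha> * (cmod z)\<^sup>2 / 2) \<le>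
      (\<alpha> / pi) * exp (\<alpha> * (cmod z)\<^sup>2) * (LINT w|lborel. Jf \<alpha> \<phi> h w) * exp (- \<alpha> * (cmod z)\<^sup>2 / 2)"
    by (intro mult_right_mono T_bound2[OF a pm hc hb ii ii2]) simp
  also have "\<dots> = (\<alpha> / pi) * (LINT w|lborel. Jf \<alpha> \<phi> h w) * (exp (\<alpha> * (cmod z)\<^sup>2) * exp (- \<alpha> * (cmod z)\<^sup>2 / 2))"
    by (simp add: algebra_simps)
  also have "exp (\<alpha> * (cmod z)\<^sup>2) * exp (- \<alpha> * (cmod z)\<^sup>2 / 2) = exp (\<alpha> * (cmod z)\<^sup>2 / 2)"
    by (simp add: mult_exp_exp)
  finally show ?thesis by (simp add: algebra_simps)
qed

theorem theorem4p7:
  fixes \<alpha> :: real and \<phi> :: "complex \<Rightarrow> complex"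
  assumes "\<alpha> > 0"
    and "\<phi> \<in> BMO"
    and "\<forall>t>0. tilde_in_C0 \<alpha> \<phi> t"
  shows "toeplitz_compact_on_Fock \<alpha> \<phi>"
proof -
  have a: "\<alpha> > 0" by fact
  have pm: "\<phi> \<in> borel_measurable lborel" by (rule phi_meas[OF assms(2)])
  have C1: "tilde_in_C0 \<alpha> \<phi> 1" and C2: "tilde_in_C0 \<alpha> \<phi> (1/2)" using assms(3) by auto
  have ii: "\<And>z. integrable lborel (tilde_integrand \<alpha> \<phi> 1 z)" using C1 unfolding tilde_in_C0_def by auto
  have ii2: "integrable lborel (tilde_integrand \<alpha> \<phi> (1/2) 0)" using C2 unfolding tilde_in_C0_def by auto
  have cont1: "continuous_on UNIV (tilde_abs \<alpha> \<phi> 1)" and lim1: "(tilde_abs \<alpha> \<phi> 1 \<longlongrightarrow> 0) at_infinity"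
    using C1 unfolding tilde_in_C0_def by auto
  obtain S where S: "\<And>z. \<bar>tilde_abs \<alpha> \<phi> 1 z\<bar> \<le> S" using C0_bounded[OF cont1 lim1] by blast
  have part1: "\<forall>f\<in>Fock_inf \<alpha>. \<forall>z. integrable lborel (toeplitz_integrand \<alpha> \<phi> f z)"
    using ti_integrable[OF a pm fock_cont fock_le ii] by blast
  have part2: "toeplitz \<alpha> \<phi> f \<in> Fock_inf \<alpha>" if f: "f \<in> Fock_inf \<alpha>" for f
  proof -
    have hol: "toeplitz \<alpha> \<phi> f holomorphic_on UNIV"
      by (rule T_holo[OF a pm fock_cont[OF f] fock_le[OF f] ii ii2])
    have N0: "0 \<le> fock_norm \<alpha> f" using fock_le[OF f, of 0] by (smt (verit) mult_nonneg_nonneg norm_ge_zero exp_gt_zero)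
    have vbf: "cmod (toeplitz \<alpha> \<phi> f z) * exp (- \<alpha> * (cmod z)\<^sup>2 / 2) \<le> fock_norm \<alpha> f * S" for z
    proof -
      have "cmod (toeplitz \<alpha> \<phi> f z) * exp (- \<alpha> * (cmod z)\<^sup>2 / 2) \<le> fock_norm \<alpha> f * tilde_abs \<alpha> \<phi> 1 z"
        by (rule T_weighted[OF a pm fock_cont[OF f] fock_le[OF f] ii])
      also have "\<dots> \<le> fock_norm \<alpha> f * S" using S[of z] N0 by (intro mult_left_mono) auto
      finally show ?thesis .
    qed
    have "bdd_above (range (\<lambda>z. cmod (toeplitz \<alpha> \<phi> f z) * exp (- \<alpha> * (cmod z)\<^sup>2 / 2)))"
      by (rule bdd_aboveI2, rule vbf)
    thus ?thesis using hol unfolding Fock_inf_def by auto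
  qed
  have part3: "\<exists>(r::nat \<Rightarrow> nat) g. strict_mono r \<and> g \<in> Fock_inf \<alpha> \<and>
           (\<lambda>n. fock_norm \<alpha> (\<lambda>z. toeplitz \<alpha> \<phi> (F (r n)) z - g z)) \<longlonglongrightarrow> 0"
    if FF: "\<forall>n. F n \<in> Fock_inf \<alpha>" and Fb: "bdd_above (range (\<lambda>n. fock_norm \<alpha> (F n)))"
    for F :: "nat \<Rightarrow> complex \<Rightarrow> complex"
  proof -
    obtain B where B: "\<And>n. fock_norm \<alpha> (F n) \<le> B" using Fb unfolding bdd_above_def by auto
    have FB: "cmod (F n z) * exp (- \<alpha> * (cmod z)\<^sup>2 / 2) \<le> B" for n z
      using fock_le[OF FF[rule_format, of n], of z] B[of n] by linarith
    have B0: "0 \<le> B" using FB[of 0 0] by (smt (verit) mult_nonneg_nonneg norm_ge_zero exp_gt_zero)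
    have FB': "cmod (F n z) \<le> B * exp (\<alpha> * (cmod z)\<^sup>2 / 2)" for n z
    proof -
      have "cmod (F n z) = cmod (F n z) * exp (- \<alpha> * (cmod z)\<^sup>2 / 2) * exp (\<alpha> * (cmod z)\<^sup>2 / 2)"
        by (simp add: mult.assoc mult_exp_exp)
      also have "\<dots> \<le> B * exp (\<alpha> * (cmod z)\<^sup>2 / 2)" by (intro mult_right_mono FB) auto
      finally show ?thesis .
    qed
    obtain g0 r where g0h: "g0 holomorphic_on UNIV" and r: "strict_mono (r :: nat \<Rightarrow> nat)"
        and g0l: "\<And>x. ((\<lambda>n. F (r n) x) \<longlongrightarrow> g0 x) sequentially"
    proof (rule Montel[of UNIV "range F" F])
      show "open (UNIV :: complex set)" by simp
      show "h holomorphic_on UNIV" if "h \<in> range F" for h using that FF unfolding Fock_inf_def by auto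
      show "range F \<subseteq> range F" by simp
      show "\<exists>B'. \<forall>h\<in>range F. \<forall>z\<in>K. cmod (h z) \<le> B'" if cK: "compact K" "K \<subseteq> UNIV" for K
      proof -
        obtain R where R: "\<And>z. z \<in> K \<Longrightarrow> norm z \<le> R"
          using compact_imp_bounded[OF cK(1)] bounded_iff by metis
        have "cmod (F n z) \<le> B * exp (\<alpha> * R\<^sup>2 / 2)" if "z \<in> K" for n z
        proof -
          have "(cmod z)\<^sup>2 \<le> R\<^sup>2" using R[OF that] by (intro power_mono) auto
          hence "exp (\<alpha> * (cmod z)\<^sup>2 / 2) \<le> exp (\<alpha> * R\<^sup>2 / 2)" using a by (simp add: mult_left_mono)
          thus ?thesis using FB'[of n z] B0 by (meson mult_left_mono order_trans)
        qed
        thus ?thesis by blast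
      qed
    qed auto
    have g0b: "cmod (g0 z) * exp (- \<alpha> * (cmod z)\<^sup>2 / 2) \<le> B" for z
    proof (rule LIMSEQ_le_const2)
      show "(\<lambda>n. cmod (F (r n) z) * exp (- \<alpha> * (cmod z)\<^sup>2 / 2)) \<longlonglongrightarrow> cmod (g0 z) * exp (- \<alpha> * (cmod z)\<^sup>2 / 2)"
        by (intro tendsto_intros g0l)
      show "\<exists>N. \<forall>n\<ge>N. cmod (F (r n) z) * exp (- \<alpha> * (cmod z)\<^sup>2 / 2) \<le> B" using FB by blast
    qed
    have g0F: "g0 \<in> Fock_inf \<alpha>"
      unfolding Fock_inf_def using g0h bdd_aboveI2[of UNIV "\<lambda>z. cmod (g0 z) * exp (- \<alpha> * (cmod z)\<^sup>2 / 2)", OF g0b] by auto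
    have g0c: "continuous_on UNIV g0" by (rule fock_cont[OF g0F])
    define hn where "hn n w = F (r n) w - g0 w" for n w
    have hnc: "continuous_on UNIV (hn n)" for n
      unfolding hn_def[abs_def] using fock_cont[OF FF[rule_format, of "r n"]] g0c
      by (intro continuous_intros) auto
    have hnb: "cmod (hn n w) * exp (- \<alpha> * (cmod w)\<^sup>2 / 2) \<le> 2 * B" for n w
    proof -
      have "cmod (hn n w) * exp (- \<alpha> * (cmod w)\<^sup>2 / 2) \<le> (cmod (F (r n) w) + cmod (g0 w)) * exp (- \<alpha> * (cmod w)\<^sup>2 / 2)"
        unfolding hn_def by (intro mult_right_mono norm_triangle_ineq4) auto
      also have "\<dots> \<le> 2 * B" using FB[of "r n" w] g0b[of w] by (simp add: algebra_simps)
      finally show ?thesis .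
    qed
    have Tdiff: "toeplitz \<alpha> \<phi> (F (r n)) z - toeplitz \<alpha> \<phi> g0 z = toeplitz \<alpha> \<phi> (hn n) z" for n z
    proof -
      have "toeplitz \<alpha> \<phi> (F (r n)) z - toeplitz \<alpha> \<phi> g0 z =
          (LINT w|lborel. toeplitz_integrand \<alpha> \<phi> (F (r n)) z w - toeplitz_integrand \<alpha> \<phi> g0 z w)"
        unfolding toeplitz_def using part1 FF g0F by (simp add: integral_diff)
      also have "\<dots> = toeplitz \<alpha> \<phi> (hn n) z"
        unfolding toeplitz_def toeplitz_integrand_def hn_def by (simp add: algebra_simps)
      finally show ?thesis .
    qed
    define I where "I n = (LINT w|lborel. Jf \<alpha> \<phi> (hn n) w)" for n
    have Il: "I \<longlonglongrightarrow> 0"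
    proof -
      have "(\<lambda>n. LINT w|lborel. Jf \<alpha> \<phi> (hn n) w) \<longlonglongrightarrow> (LINT (w::complex)|lborel. (0::real))"
      proof (rule integral_dominated_convergence[where w="\<lambda>w. (2 * B) * tilde_integrand \<alpha> \<phi> (1/2) 0 w"
            and s="\<lambda>n. Jf \<alpha> \<phi> (hn n)" and f="\<lambda>w. 0::real" and M=lborel])
        show "(\<lambda>w. 0::real) \<in> borel_measurable lborel" by simp
        show "Jf \<alpha> \<phi> (hn n) \<in> borel_measurable lborel" for n by (rule Jf_meas[OF pm hnc])
        show "integrable lborel (\<lambda>w. (2 * B) * tilde_integrand \<alpha> \<phi> (1/2) 0 w)" using ii2 by simp
        show "AE w in lborel. (\<lambda>n. Jf \<alpha> \<phi> (hn n) w) \<longlonglongrightarrow> 0"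
        proof (intro AE_I2)
          fix w
          have "(\<lambda>n. hn n w) \<longlonglongrightarrow> 0"
            unfolding hn_def using tendsto_diff[OF g0l[of w] tendsto_const[of "g0 w"]] by simp
          hence "(\<lambda>n. cmod (hn n w)) \<longlonglongrightarrow> 0" by (simp add: tendsto_norm_zero)
          hence "(\<lambda>n. cmod (\<phi> w) * cmod (hn n w) * exp (- \<alpha> * (cmod w)\<^sup>2 / 2) * exp (- \<alpha> * (cmod w)\<^sup>2 / 4)) \<longlonglongrightarrow>
                cmod (\<phi> w) * 0 * exp (- \<alpha> * (cmod w)\<^sup>2 / 2) * exp (- \<alpha> * (cmod w)\<^sup>2 / 4)"
            by (intro tendsto_intros)
          thus "(\<lambda>n. Jf \<alpha> \<phi> (hn n) w) \<longlonglongrightarrow> 0" unfolding Jf_def by simp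
        qed
        show "AE w in lborel. norm (Jf \<alpha> \<phi> (hn n) w) \<le> (2 * B) * tilde_integrand \<alpha> \<phi> (1/2) 0 w" for n
          by (intro AE_I2 Jf_bound hnb)
      qed
      thus ?thesis unfolding I_def by simp
    qed
    define g where "g = toeplitz \<alpha> \<phi> g0"
    have gF: "g \<in> Fock_inf \<alpha>" unfolding g_def by (rule part2[OF g0F])
    have conv: "(\<lambda>n. fock_norm \<alpha> (\<lambda>z. toeplitz \<alpha> \<phi> (F (r n)) z - g z)) \<longlonglongrightarrow> 0"
    proof (rule LIMSEQ_I)
      fix \<epsilon> :: real assume e: "0 < \<epsilon>"
      have "eventually (\<lambda>z. dist (tilde_abs \<alpha> \<phi> 1 z) 0 < \<epsilon> / (2 * (2 * B + 1))) at_infinity"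
        using lim1 by (rule tendstoD) (use e B0 in simp)
      then obtain R1 where R1: "\<And>z. R1 \<le> norm z \<Longrightarrow> \<bar>tilde_abs \<alpha> \<phi> 1 z\<bar> < \<epsilon> / (2 * (2 * B + 1))"
        unfolding eventually_at_infinity by auto
      define C1 where "C1 = (\<alpha> / pi) * exp (\<alpha> * R1\<^sup>2 / 2)"
      have C10: "0 \<le> C1" unfolding C1_def using a by simp
      obtain N where N: "\<And>n. n \<ge> N \<Longrightarrow> norm (I n - 0) < \<epsilon> / (2 * (C1 + 1))"
        using LIMSEQ_D[OF Il, of "\<epsilon> / (2 * (C1 + 1))"] e C10 by auto
      show "\<exists>N. \<forall>n\<ge>N. norm (fock_norm \<alpha> (\<lambda>z. toeplitz \<alpha> \<phi> (F (r n)) z - g z) - 0) < \<epsilon>"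
      proof (intro exI allI impI)
        fix n assume nN: "n \<ge> N"
        have eqn: "(\<lambda>z. toeplitz \<alpha> \<phi> (F (r n)) z - g z) = toeplitz \<alpha> \<phi> (hn n)"
          unfolding g_def using Tdiff by auto
        have vb: "cmod (toeplitz \<alpha> \<phi> (hn n) z) * exp (- \<alpha> * (cmod z)\<^sup>2 / 2) \<le> \<epsilon> / 2" for z
        proof (cases "R1 \<le> norm z")
          case True
          have "cmod (toeplitz \<alpha> \<phi> (hn n) z) * exp (- \<alpha> * (cmod z)\<^sup>2 / 2) \<le> (2 * B) * tilde_abs \<alpha> \<phi> 1 z"
            by (rule T_weighted[OF a pm hnc hnb ii])
          also have "\<dots> \<le> (2 * B) * (\<epsilon> / (2 * (2 * B + 1)))"
            using R1[OF True] B0 by (intro mult_left_mono) auto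
          also have "\<dots> \<le> \<epsilon> / 2" using B0 e by (simp add: field_simps)
          finally show ?thesis .
        next
          case False
          have "cmod (toeplitz \<alpha> \<phi> (hn n) z) * exp (- \<alpha> * (cmod z)\<^sup>2 / 2) \<le>
              (\<alpha> / pi) * exp (\<alpha> * (cmod z)\<^sup>2 / 2) * I n"
            unfolding I_def by (rule T_weighted2[OF a pm hnc hnb ii ii2])
          also have "\<dots> \<le> C1 * \<bar>I n\<bar>"
          proof -
            have "(cmod z)\<^sup>2 \<le> R1\<^sup>2" using False by (intro power_mono) auto
            hence "exp (\<alpha> * (cmod z)\<^sup>2 / 2) \<le> exp (\<alpha> * R1\<^sup>2 / 2)" using a by (simp add: mult_left_mono)
            hence "(\<alpha> / pi) * exp (\<alpha> * (cmod z)\<^sup>2 / 2) \<le> C1" unfolding C1_def using a by (intro mult_left_mono) auto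
            note hC = this
            have p: "0 \<le> (\<alpha> / pi) * exp (\<alpha> * (cmod z)\<^sup>2 / 2)" using a by simp
            have "(\<alpha> / pi) * exp (\<alpha> * (cmod z)\<^sup>2 / 2) * I n \<le> (\<alpha> / pi) * exp (\<alpha> * (cmod z)\<^sup>2 / 2) * \<bar>I n\<bar>"
              by (rule mult_left_mono[OF abs_ge_self p])
            also have "\<dots> \<le> C1 * \<bar>I n\<bar>" by (rule mult_right_mono[OF hC abs_ge_zero])
            finally show ?thesis .
          qed
          also have "\<dots> \<le> C1 * (\<epsilon> / (2 * (C1 + 1)))"
            using N[OF nN] C10 by (intro mult_left_mono) auto
          also have "\<dots> \<le> \<epsilon> / 2" using C10 e by (simp add: field_simps)
          finally show ?thesis .
        qed
        have bdd: "bdd_above (range (\<lambda>z. cmod (toeplitz \<alpha> \<phi> (hn n) z) * exp (- \<alpha> * (cmod z)\<^sup>2 / 2)))"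
          by (rule bdd_aboveI2, rule vb)
        have up: "fock_norm \<alpha> (toeplitz \<alpha> \<phi> (hn n)) \<le> \<epsilon> / 2"
          unfolding fock_norm_def using vb by (intro cSUP_least) auto
        have lo: "0 \<le> fock_norm \<alpha> (toeplitz \<alpha> \<phi> (hn n))"
        proof -
          have "cmod (toeplitz \<alpha> \<phi> (hn n) 0) * exp (- \<alpha> * (cmod 0)\<^sup>2 / 2) \<le> fock_norm \<alpha> (toeplitz \<alpha> \<phi> (hn n))"
            unfolding fock_norm_def using bdd by (intro cSUP_upper) auto
          thus ?thesis by (smt (verit) mult_nonneg_nonneg norm_ge_zero exp_gt_zero)
        qed
        show "norm (fock_norm \<alpha> (\<lambda>z. toeplitz \<alpha> \<phi> (F (r n)) z - g z) - 0) < \<epsilon>"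
          unfolding eqn using up lo e by simp
      qed
    qed
    show ?thesis using r gF conv by blast
  qed
  show ?thesis unfolding toeplitz_compact_on_Fock_def
    using part1 part2 part3 by blast
qed

end
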